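(* Let $G=(V,E)$ be an infinite, connected, non-amenable graph with all degrees bounded by $\Delta<\infty$, and consider the branching random walk $(Z^x_a)_{a\in T}$ on $G$ started at $x$ described below. There is $u_0>0$ such that for every $x\in V$ and every $u<u_0$, \[ \lim_{y:\,d(x,y)\to\infty}\mathbf P_u[\exists a\in T: Z^x_a=y]=0. \]
   Context: $d(\cdot,\cdot)$ is graph distance; non-amenable means $\inf\{|\partial_VK|/|K|:0<|K|<\infty\}>0$ where $\partial_VK$ is the set of vertices outside $K$ adjacent to $K$. Branching random walk under $\mathbf P_u$: a two-type Galton–Watson forest $\mathcal T$ with vertex set $T$ and types $\circ$, $\bullet$. Generation $0$ consists of a Poisson$(u\Delta^2)$ number of type-$\circ$ individuals. Independently, each $\circ$-individual has exactly $2$ children of type $\bullet$ and a Poisson$(u\Delta^2)$ number of children of type $\circ$; each $\bullet$-individual has exactly $1$ child of type $\bullet$ and a Poisson$(u\Delta^2)$ number of children of type $\circ$. Positions: $Z^x_a=x$ for every $a$ in generation $0$, and each child is placed at a uniformly chosen neighbour of its parent's position, independently over all parent–child edges. *)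

theory Defs
  imports "HOL-Probability.Probability"
begin

text \<open>A graph on the vertex type 'v is given by a symmetric adjacency relation E.\<close>

definition nbrs :: "('v \<Rightarrow> 'v \<Rightarrow> bool) \<Rightarrow> 'v \<Rightarrow> 'v set" where
  "nbrs E v = {w. E v w}"

text \<open>A walk of length n from x to y: a list of n+1 vertices, consecutive ones adjacent.\<close>
definition is_walk :: "('v \<Rightarrow> 'v \<Rightarrow> bool) \<Rightarrow> 'v list \<Rightarrow> bool" where
  "is_walk E p \<longleftrightarrow> p \<noteq> [] \<and> (\<forall>i < length p - 1. E (p ! i) (p ! Suc i))"

definition connected_graph :: "('v \<Rightarrow> 'v \<Rightarrow> bool) \<Rightarrow> bool" where
  "connected_graph E \<longleftrightarrow> (\<forall>x y. \<exists>p. is_walk E p \<and> hd p = x \<and> last p = y)"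

definition gdist :: "('v \<Rightarrow> 'v \<Rightarrow> bool) \<Rightarrow> 'v \<Rightarrow> 'v \<Rightarrow> nat" where
  "gdist E x y = (LEAST n. \<exists>p. is_walk E p \<and> hd p = x \<and> last p = y \<and> length p = Suc n)"

definition vboundary :: "('v \<Rightarrow> 'v \<Rightarrow> bool) \<Rightarrow> 'v set \<Rightarrow> 'v set" where
  "vboundary E K = {w. w \<notin> K \<and> (\<exists>v\<in>K. E v w)}"

definition non_amenable :: "('v \<Rightarrow> 'v \<Rightarrow> bool) \<Rightarrow> bool" where
  "non_amenable E \<longleftrightarrow>
     (INF K \<in> {K. finite K \<and> K \<noteq> {}}. real (card (vboundary E K)) / real (card K)) > 0"

datatype ptype = Circ | Bullet

text \<open>Individual of given type at a position, with its list of children subtrees.\<close>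
datatype 'v btree = Nd ptype 'v "'v btree list"

fun seq_pmf :: "'a pmf list \<Rightarrow> 'a list pmf" where
  "seq_pmf [] = return_pmf []"
| "seq_pmf (p # ps) = do { x \<leftarrow> p; xs \<leftarrow> seq_pmf ps; return_pmf (x # xs) }"

fun n_bullet :: "ptype \<Rightarrow> nat" where
  "n_bullet Circ = 2"
| "n_bullet Bullet = 1"

text \<open>Law of the subtree (truncated after n further generations) of an individual of type t
  at position v; rate is u*Delta^2.\<close>
primrec bgen :: "('v \<Rightarrow> 'v \<Rightarrow> bool) \<Rightarrow> real \<Rightarrow> nat \<Rightarrow> ptype \<Rightarrow> 'v \<Rightarrow> 'v btree pmf" where
  "bgen E r 0 t v = return_pmf (Nd t v [])"
| "bgen E r (Suc n) t v = do {
      k \<leftarrow> poisson_pmf r;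
      cs \<leftarrow> seq_pmf (map (\<lambda>s. do { w \<leftarrow> pmf_of_set (nbrs E v); bgen E r n s w })
                          (replicate (n_bullet t) Bullet @ replicate k Circ));
      return_pmf (Nd t v cs) }"

definition bforest :: "('v \<Rightarrow> 'v \<Rightarrow> bool) \<Rightarrow> real \<Rightarrow> nat \<Rightarrow> 'v \<Rightarrow> 'v btree list pmf" where
  "bforest E r n x = do { k \<leftarrow> poisson_pmf r; seq_pmf (replicate k (bgen E r n Circ x)) }"

fun visits :: "'v \<Rightarrow> 'v btree \<Rightarrow> bool" where
  "visits y (Nd t v cs) \<longleftrightarrow> v = y \<or> (\<exists>c\<in>set cs. visits y c)"

text \<open>P_u[exists a in T: Z^x_a = y], as the increasing limit over generations.\<close>
definition hit_prob :: "('v \<Rightarrow> 'v \<Rightarrow> bool) \<Rightarrow> nat \<Rightarrow> real \<Rightarrow> 'v \<Rightarrow> 'v \<Rightarrow> real" where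
  "hit_prob E \<Delta> u x y =
     (SUP n. measure_pmf.prob (bforest E (u * real \<Delta> ^ 2) n x) {F. \<exists>c\<in>set F. visits y c})"

end

theory Submission
  imports Defs "HOL-Analysis.Analysis"
begin


lemma aux_ineq:
  fixes b q P L m :: real
  assumes "0 < b" "0 < q" "b / q * P \<le> L" "q \<le> m * b" "0 \<le> L"
  shows "P \<le> m * L"
proof -
  have "b * P \<le> q * L" using assms(2,3) by (simp add: field_simps)
  also have "\<dots> \<le> (m * b) * L" using assms(4,5) by (rule mult_right_mono)
  finally have "b * P \<le> b * (m * L)" by (simp add: algebra_simps)
  then show ?thesis using assms(1) by simp
qed

locale gr =
  fixes E :: "'v \<Rightarrow> 'v \<Rightarrow> bool" and \<Delta> :: nat and h :: real
  assumes sym: "\<And>v w. E v w \<Longrightarrow> E w v"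
    and fin: "\<And>v. finite (nbrs E v)"
    and degle: "\<And>v. card (nbrs E v) \<le> \<Delta>"
    and degpos: "\<And>v. nbrs E v \<noteq> {}"
    and hpos: "0 < h" and hle: "h \<le> 1"
    and iso: "\<And>K. finite K \<Longrightarrow> K \<noteq> {} \<Longrightarrow> h * real (card K) \<le> real (card (vboundary E K))"
begin

definition D :: "'v \<Rightarrow> real" where "D v = real (card (nbrs E v))"
definition Pop :: "('v \<Rightarrow> real) \<Rightarrow> 'v \<Rightarrow> real" where "Pop f v = (\<Sum>w\<in>nbrs E v. f w) / D v"
definition Lz :: "('v \<Rightarrow> real) \<Rightarrow> 'v \<Rightarrow> real" where "Lz f v = (f v + Pop f v) / 2"
definition nrm :: "'v set \<Rightarrow> ('v \<Rightarrow> real) \<Rightarrow> real" where "nrm S f = (\<Sum>v\<in>S. D v * (f v)^2)"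
definition nb :: "'v set \<Rightarrow> 'v set" where "nb S = S \<union> (\<Union>v\<in>S. nbrs E v)"
definition EE :: "'v set \<Rightarrow> ('v \<times> 'v) set" where "EE S = {(v,w). E v w \<and> (v \<in> S \<or> w \<in> S)}"
definition supp :: "'v set \<Rightarrow> ('v \<Rightarrow> real) \<Rightarrow> bool" where "supp S f \<longleftrightarrow> (\<forall>v. v \<notin> S \<longrightarrow> f v = 0)"

lemma D_ge1: "1 \<le> D v"
proof -
  have "card (nbrs E v) > 0" using fin degpos card_gt_0_iff by blast
  then show ?thesis by (simp add: D_def)
qed

lemma D_pos: "0 < D v" using D_ge1[of v] by simp

lemma D_le: "D v \<le> real \<Delta>" using degle by (simp add: D_def)

lemma Delta_ge1: "1 \<le> real \<Delta>" using D_ge1 D_le order_trans by blast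

lemma nbrs_iff: "w \<in> nbrs E v \<longleftrightarrow> E v w" by (simp add: nbrs_def)

lemma nb_fin: "finite S \<Longrightarrow> finite (nb S)"
  using fin by (simp add: nb_def)

lemma nb_sup: "S \<subseteq> nb S" by (auto simp: nb_def)

lemma EE_sub: "EE S \<subseteq> Sigma (nb S) (nbrs E)"
  unfolding EE_def nb_def nbrs_def using sym by blast

lemma EE_fin: "finite S \<Longrightarrow> finite (EE S)"
  by (rule finite_subset[OF EE_sub]) (use nb_fin fin in auto)

lemma EE_swap:
  "(\<Sum>(v,w)\<in>EE S. F v w) = (\<Sum>(v,w)\<in>EE S. F w v)"
  by (rule sum.reindex_bij_witness[where i=prod.swap and j=prod.swap])
     (auto simp: EE_def intro: sym)

lemma edge_sum:
  assumes S: "finite S" and F: "\<And>v w. v \<notin> S \<Longrightarrow> F v w = 0"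
  shows "(\<Sum>(v,w)\<in>EE S. F v w) = (\<Sum>v\<in>S. \<Sum>w\<in>nbrs E v. F v w)"
proof -
  have "(\<Sum>v\<in>S. \<Sum>w\<in>nbrs E v. F v w) = (\<Sum>(v,w)\<in>Sigma S (nbrs E). F v w)"
    using S fin by (simp add: sum.Sigma)
  also have "\<dots> = (\<Sum>(v,w)\<in>EE S. F v w)"
  proof (rule sum.mono_neutral_left)
    show "finite (EE S)" using EE_fin S by blast
    show "Sigma S (nbrs E) \<subseteq> EE S" by (auto simp: EE_def nbrs_iff)
    show "\<forall>i\<in>EE S - Sigma S (nbrs E). (case i of (v, w) \<Rightarrow> F v w) = 0"
      using F by (auto simp: EE_def nbrs_iff)
  qed
  finally show ?thesis by simp
qed

lemma edge_sum_T:
  assumes S: "finite S" and T: "finite T" "nb S \<subseteq> T" and F: "\<And>v w. w \<notin> S \<Longrightarrow> F v w = 0"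
  shows "(\<Sum>v\<in>T. \<Sum>w\<in>nbrs E v. F v w) = (\<Sum>(v,w)\<in>EE S. F v w)"
proof -
  have "(\<Sum>v\<in>T. \<Sum>w\<in>nbrs E v. F v w) = (\<Sum>(v,w)\<in>Sigma T (nbrs E). F v w)"
    using T fin by (simp add: sum.Sigma)
  also have "\<dots> = (\<Sum>(v,w)\<in>EE S. F v w)"
  proof (rule sum.mono_neutral_right)
    show "finite (Sigma T (nbrs E))" using T fin by blast
    show "EE S \<subseteq> Sigma T (nbrs E)" using EE_sub[of S] T(2) by blast
    show "\<forall>i\<in>Sigma T (nbrs E) - EE S. (case i of (v, w) \<Rightarrow> F v w) = 0"
      using F by (auto simp: EE_def nbrs_iff)
  qed
  finally show ?thesis by simp
qed

lemma iso_sum: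
  assumes S: "finite S"
  shows "supp S g \<Longrightarrow> (\<forall>v. 0 \<le> g v) \<Longrightarrow> h * (\<Sum>v\<in>S. g v) \<le> (\<Sum>(v,w)\<in>EE S. \<bar>g v - g w\<bar>)"
proof (induction "card {v\<in>S. g v \<noteq> 0}" arbitrary: g rule: less_induct)
  case (less g)
  define K where "K = {v\<in>S. g v \<noteq> 0}"
  have Kfin: "finite K" using S by (simp add: K_def)
  have KS: "K \<subseteq> S" by (auto simp: K_def)
  have rhs_nn: "0 \<le> (\<Sum>(v,w)\<in>EE S. \<bar>g v - g w\<bar>)" by (auto intro: sum_nonneg)
  show ?case
  proof (cases "K = {}")
    case True
    then have "\<forall>v\<in>S. g v = 0" by (auto simp: K_def)
    then have "(\<Sum>v\<in>S. g v) = 0" by simp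
    then show ?thesis using rhs_nn by simp
  next
    case False
    define m where "m = Min (g ` K)"
    have "m \<in> g ` K" using Kfin False by (simp add: m_def)
    then obtain v0 where v0: "v0 \<in> K" "g v0 = m" by auto
    have mpos: "0 < m" using v0 less.prems(2) by (auto simp: K_def order_le_less)
    have mle: "\<And>v. v\<in>K \<Longrightarrow> m \<le> g v" using Kfin by (simp add: m_def)
    define ind where "ind = (\<lambda>v. if v \<in> K then (1::real) else 0)"
    define g' where "g' = (\<lambda>v. if v \<in> K then g v - m else 0)"
    have g'nn: "\<forall>v. 0 \<le> g' v" using mle by (auto simp: g'_def)
    have g'supp: "supp S g'" using KS by (auto simp: g'_def supp_def)
    have gout: "\<And>v. v \<notin> K \<Longrightarrow> g v = 0" using less.prems(1) by (auto simp: K_def supp_def)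
    have decomp: "\<And>v. g v = m * ind v + g' v" using gout by (auto simp: ind_def g'_def)
    have sub: "{v\<in>S. g' v \<noteq> 0} \<subset> K"
      using v0 by (auto simp: g'_def K_def)
    then have lt: "card {v\<in>S. g' v \<noteq> 0} < card {v\<in>S. g v \<noteq> 0}"
      using psubset_card_mono Kfin unfolding K_def by blast
    have IH: "h * (\<Sum>v\<in>S. g' v) \<le> (\<Sum>(v,w)\<in>EE S. \<bar>g' v - g' w\<bar>)"
      using less.hyps[OF lt g'supp g'nn] by simp
    have edge: "\<And>v w. \<bar>g v - g w\<bar> = m * \<bar>ind v - ind w\<bar> + \<bar>g' v - g' w\<bar>"
    proof -
      fix v w
      show "\<bar>g v - g w\<bar> = m * \<bar>ind v - ind w\<bar> + \<bar>g' v - g' w\<bar>"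
        using mpos mle[of v] mle[of w] gout[of v] gout[of w]
        by (cases "v \<in> K"; cases "w \<in> K") (auto simp: ind_def g'_def)
    qed
    define B where "B = {(v,w)\<in>EE S. v \<in> K \<and> w \<notin> K}"
    have Bfin: "finite B" unfolding B_def by (rule finite_subset[OF _ EE_fin[OF S]]) auto
    have "vboundary E K \<subseteq> snd ` B"
    proof
      fix w assume "w \<in> vboundary E K"
      then obtain v where "w \<notin> K" "v \<in> K" "E v w" by (auto simp: vboundary_def)
      then have "(v,w) \<in> B" using KS by (auto simp: B_def EE_def)
      then show "w \<in> snd ` B" by force
    qed
    then have "card (vboundary E K) \<le> card B"
      using Bfin card_image_le card_mono finite_imageI order_trans by metis
    also have "real (card B) = (\<Sum>(v,w)\<in>B. \<bar>ind v - ind w\<bar>)"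
    proof -
      have "(\<Sum>(v,w)\<in>B. \<bar>ind v - ind w\<bar>) = (\<Sum>p\<in>B. (1::real))"
        by (rule sum.cong) (auto simp: B_def ind_def)
      then show ?thesis by simp
    qed
    also have "\<dots> \<le> (\<Sum>(v,w)\<in>EE S. \<bar>ind v - ind w\<bar>)"
      by (rule sum_mono2) (auto simp: EE_fin S B_def)
    finally have bnd: "h * real (card K) \<le> (\<Sum>(v,w)\<in>EE S. \<bar>ind v - ind w\<bar>)"
      using iso[OF Kfin False] by linarith
    have sumS: "(\<Sum>v\<in>S. g v) = m * real (card K) + (\<Sum>v\<in>S. g' v)"
    proof -
      have "(\<Sum>v\<in>S. g v) = (\<Sum>v\<in>S. m * ind v + g' v)" using decomp by simp
      also have "\<dots> = m * (\<Sum>v\<in>S. ind v) + (\<Sum>v\<in>S. g' v)"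
        by (simp add: sum.distrib sum_distrib_left)
      also have "(\<Sum>v\<in>S. ind v) = real (card K)"
        using KS S by (simp add: ind_def sum.If_cases Int_absorb1)
      finally show ?thesis .
    qed
    have sumE: "(\<Sum>(v,w)\<in>EE S. \<bar>g v - g w\<bar>) = m * (\<Sum>(v,w)\<in>EE S. \<bar>ind v - ind w\<bar>) + (\<Sum>(v,w)\<in>EE S. \<bar>g' v - g' w\<bar>)"
      by (simp add: edge case_prod_beta sum.distrib sum_distrib_left)
    have "h * (\<Sum>v\<in>S. g v) = m * (h * real (card K)) + h * (\<Sum>v\<in>S. g' v)"
      by (simp add: sumS algebra_simps)
    also have "\<dots> \<le> m * (\<Sum>(v,w)\<in>EE S. \<bar>ind v - ind w\<bar>) + (\<Sum>(v,w)\<in>EE S. \<bar>g' v - g' w\<bar>)"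
      using bnd IH mpos by (intro add_mono mult_left_mono) auto
    finally show ?thesis using sumE by simp
  qed
qed

lemma nrm_edge:
  assumes S: "finite S" and f: "supp S f"
  shows "nrm S f = (\<Sum>(v,w)\<in>EE S. (f v)^2)"
proof -
  have "(\<Sum>(v,w)\<in>EE S. (f v)^2) = (\<Sum>v\<in>S. \<Sum>w\<in>nbrs E v. (f v)^2)"
    by (rule edge_sum[OF S]) (use f in \<open>auto simp: supp_def\<close>)
  also have "\<dots> = nrm S f" by (simp add: nrm_def D_def)
  finally show ?thesis by simp
qed

lemma Q_edge:
  assumes S: "finite S" and f: "supp S f"
  shows "(\<Sum>v\<in>S. f v * (\<Sum>w\<in>nbrs E v. f w)) = (\<Sum>(v,w)\<in>EE S. f v * f w)"
proof -
  have "(\<Sum>(v,w)\<in>EE S. f v * f w) = (\<Sum>v\<in>S. \<Sum>w\<in>nbrs E v. f v * f w)"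
    by (rule edge_sum[OF S]) (use f in \<open>auto simp: supp_def\<close>)
  then show ?thesis by (simp add: sum_distrib_left)
qed

lemma cheeger:
  assumes S: "finite S" and f: "supp S f"
  shows "(\<Sum>v\<in>S. f v * (\<Sum>w\<in>nbrs E v. f w)) \<le> (1 - h^2 / (8 * (real \<Delta>)^2)) * nrm S f"
proof -
  define N where "N = nrm S f"
  define Q where "Q = (\<Sum>v\<in>S. f v * (\<Sum>w\<in>nbrs E v. f w))"
  have N1: "N = (\<Sum>(v,w)\<in>EE S. (f v)^2)" using nrm_edge[OF S f] by (simp add: N_def)
  have N2: "N = (\<Sum>(v,w)\<in>EE S. (f w)^2)" using N1 EE_swap[of "\<lambda>v w. (f v)^2" S] by simp
  have Q1: "Q = (\<Sum>(v,w)\<in>EE S. f v * f w)" using Q_edge[OF S f] by (simp add: Q_def)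
  have minus: "(\<Sum>(v,w)\<in>EE S. (f v - f w)^2) = 2*N - 2*Q"
  proof -
    have "(\<Sum>(v,w)\<in>EE S. (f v - f w)^2) = (\<Sum>(v,w)\<in>EE S. (f v)^2 + (f w)^2 - 2 * (f v * f w))"
      by (rule sum.cong) (auto simp: power2_diff)
    also have "\<dots> = (\<Sum>(v,w)\<in>EE S. (f v)^2) + (\<Sum>(v,w)\<in>EE S. (f w)^2) - 2 * (\<Sum>(v,w)\<in>EE S. f v * f w)"
      by (simp add: case_prod_beta sum.distrib sum_subtractf sum_distrib_left)
    finally show ?thesis using N1 N2 Q1 by simp
  qed
  have plus: "(\<Sum>(v,w)\<in>EE S. (f v + f w)^2) = 2*N + 2*Q"
  proof -
    have "(\<Sum>(v,w)\<in>EE S. (f v + f w)^2) = (\<Sum>(v,w)\<in>EE S. (f v)^2 + (f w)^2 + 2 * (f v * f w))"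
      by (rule sum.cong) (auto simp: power2_sum)
    also have "\<dots> = (\<Sum>(v,w)\<in>EE S. (f v)^2) + (\<Sum>(v,w)\<in>EE S. (f w)^2) + 2 * (\<Sum>(v,w)\<in>EE S. f v * f w)"
      by (simp add: case_prod_beta sum.distrib sum_distrib_left)
    finally show ?thesis using N1 N2 Q1 by simp
  qed
  have QN: "Q \<le> N"
  proof -
    have "0 \<le> (\<Sum>(v,w)\<in>EE S. (f v - f w)^2)" by (auto intro: sum_nonneg)
    then show ?thesis using minus by simp
  qed
  have QN2: "-N \<le> Q"
  proof -
    have "0 \<le> (\<Sum>(v,w)\<in>EE S. (f v + f w)^2)" by (auto intro: sum_nonneg)
    then show ?thesis using plus by simp
  qed
  have Nnn: "0 \<le> N" unfolding N_def nrm_def using D_pos[THEN less_imp_le] by (auto intro!: sum_nonneg mult_nonneg_nonneg)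
  have g: "supp S (\<lambda>v. (f v)^2)" using f by (simp add: supp_def)
  have I: "h * (\<Sum>v\<in>S. (f v)^2) \<le> (\<Sum>(v,w)\<in>EE S. \<bar>(f v)^2 - (f w)^2\<bar>)"
    using iso_sum[OF S g] by simp
  have ND: "N \<le> real \<Delta> * (\<Sum>v\<in>S. (f v)^2)"
    unfolding N_def nrm_def sum_distrib_left using D_le
    by (intro sum_mono mult_right_mono) auto
  have CS: "(\<Sum>(v,w)\<in>EE S. \<bar>(f v)^2 - (f w)^2\<bar>)^2 \<le> (\<Sum>(v,w)\<in>EE S. (f v - f w)^2) * (\<Sum>(v,w)\<in>EE S. (f v + f w)^2)"
  proof -
    have "(\<Sum>(v,w)\<in>EE S. \<bar>(f v)^2 - (f w)^2\<bar>) = (\<Sum>p\<in>EE S. \<bar>f (fst p) - f (snd p)\<bar> * \<bar>f (fst p) + f (snd p)\<bar>)"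
      by (rule sum.cong) (auto simp: abs_mult[symmetric] power2_eq_square algebra_simps)
    then show ?thesis
      using Cauchy_Schwarz_ineq_sum[of "\<lambda>p. \<bar>f (fst p) - f (snd p)\<bar>" "\<lambda>p. \<bar>f (fst p) + f (snd p)\<bar>" "EE S"]
      by (simp add: case_prod_beta)
  qed
  have Dp: "0 < real \<Delta>" using Delta_ge1 by simp
  have key: "(h * N / real \<Delta>)^2 \<le> (2*N - 2*Q) * (4*N)"
  proof -
    have a: "0 \<le> h * N / real \<Delta>" using hpos Nnn Dp by simp
    have "h * N / real \<Delta> \<le> h * (\<Sum>v\<in>S. (f v)^2)"
    proof -
      have "N / real \<Delta> \<le> (\<Sum>v\<in>S. (f v)^2)" using ND Dp by (simp add: divide_le_eq mult.commute)
      then have "h * (N / real \<Delta>) \<le> h * (\<Sum>v\<in>S. (f v)^2)" by (rule mult_left_mono) (use hpos in simp)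
      then show ?thesis by simp
    qed
    also have "\<dots> \<le> (\<Sum>(v,w)\<in>EE S. \<bar>(f v)^2 - (f w)^2\<bar>)" by (rule I)
    finally have "(h * N / real \<Delta>)^2 \<le> (\<Sum>(v,w)\<in>EE S. \<bar>(f v)^2 - (f w)^2\<bar>)^2"
      using a by (intro power_mono) auto
    also have "\<dots> \<le> (2*N - 2*Q) * (2*N + 2*Q)" using CS minus plus by simp
    also have "\<dots> \<le> (2*N - 2*Q) * (4*N)" using QN by (intro mult_left_mono) auto
    finally show ?thesis .
  qed
  show ?thesis
  proof (cases "N = 0")
    case True then show ?thesis using QN by (simp add: N_def Q_def)
  next
    case False
    then have Np: "0 < N" using Nnn by simp
    have "N * (h^2 / (real \<Delta>)^2 * N) \<le> N * (8 * (N - Q))" using key by (simp add: power_divide power_mult_distrib power2_eq_square algebra_simps)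
    then have "h^2 / (real \<Delta>)^2 * N \<le> 8 * (N - Q)"
      using Np by (rule mult_left_le_imp_le)
    then have "h^2 * N / (real \<Delta>)^2 \<le> 8 * (N - Q)" by simp
    then have "Q \<le> N - h^2 * N / (8 * (real \<Delta>)^2)" by (simp add: field_simps)
    then show ?thesis by (simp add: N_def Q_def algebra_simps)
  qed
qed

lemma nrm_mono_set:
  assumes "finite T" "S \<subseteq> T" "supp S f"
  shows "nrm T f = nrm S f"
  unfolding nrm_def
  by (rule sum.mono_neutral_right[symmetric, symmetric]) (use assms in \<open>auto simp: supp_def\<close>)

lemma nrm_nonneg: "0 \<le> nrm S f"
  unfolding nrm_def using D_pos[THEN less_imp_le] by (auto intro!: sum_nonneg mult_nonneg_nonneg)

lemma Pop_sq: "D v * (Pop f v)^2 \<le> (\<Sum>w\<in>nbrs E v. (f w)^2)"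
proof -
  have cs: "(\<Sum>w\<in>nbrs E v. 1 * f w)^2 \<le> (\<Sum>w\<in>nbrs E v. 1^2) * (\<Sum>w\<in>nbrs E v. (f w)^2)"
    by (rule Cauchy_Schwarz_ineq_sum)
  have "D v * (Pop f v)^2 = (\<Sum>w\<in>nbrs E v. f w)^2 / D v"
    using D_pos[of v] by (simp add: Pop_def power2_eq_square field_simps)
  also have "\<dots> \<le> (D v * (\<Sum>w\<in>nbrs E v. (f w)^2)) / D v"
    using cs D_pos[of v] by (intro divide_right_mono) (auto simp: D_def)
  also have "\<dots> = (\<Sum>w\<in>nbrs E v. (f w)^2)" using D_pos[of v] by simp
  finally show ?thesis .
qed

lemma lz_nrm:
  assumes S: "finite S" and T: "finite T" "nb S \<subseteq> T" and f: "supp S f"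
  shows "nrm T (Lz f) \<le> (1 - h^2 / (16 * (real \<Delta>)^2)) * nrm S f"
proof -
  have ST: "S \<subseteq> T" using T(2) nb_sup by blast
  define N where "N = nrm S f"
  define Q where "Q = (\<Sum>v\<in>S. f v * (\<Sum>w\<in>nbrs E v. f w))"
  have nT: "nrm T f = N" using nrm_mono_set[OF T(1) ST f] by (simp add: N_def)
  have QT: "(\<Sum>v\<in>T. D v * f v * Pop f v) = Q"
  proof -
    have "(\<Sum>v\<in>T. D v * f v * Pop f v) = (\<Sum>v\<in>T. f v * (\<Sum>w\<in>nbrs E v. f w))"
    proof (rule sum.cong)
      fix v show "D v * f v * Pop f v = f v * (\<Sum>w\<in>nbrs E v. f w)"
        using D_pos[of v] by (simp add: Pop_def)
    qed simp
    also have "\<dots> = Q" unfolding Q_def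
      by (rule sum.mono_neutral_right[symmetric, symmetric]) (use T ST f in \<open>auto simp: supp_def\<close>)
    finally show ?thesis .
  qed
  have PT: "nrm T (Pop f) \<le> N"
  proof -
    have "nrm T (Pop f) \<le> (\<Sum>v\<in>T. \<Sum>w\<in>nbrs E v. (f w)^2)"
      unfolding nrm_def by (intro sum_mono Pop_sq)
    also have "\<dots> = (\<Sum>(v,w)\<in>EE S. (f w)^2)"
      by (rule edge_sum_T[OF S T]) (use f in \<open>auto simp: supp_def\<close>)
    also have "\<dots> = (\<Sum>(v,w)\<in>EE S. (f v)^2)" using EE_swap[of "\<lambda>v w. (f w)^2" S] by simp
    also have "\<dots> = N" using nrm_edge[OF S f] by (simp add: N_def)
    finally show ?thesis .
  qed
  have exp: "nrm T (Lz f) = (nrm T f + 2 * (\<Sum>v\<in>T. D v * f v * Pop f v) + nrm T (Pop f)) / 4"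
  proof -
    have "nrm T (Lz f) = (\<Sum>v\<in>T. (D v * (f v)^2 + 2 * (D v * f v * Pop f v) + D v * (Pop f v)^2) / 4)"
      unfolding nrm_def Lz_def by (rule sum.cong) (auto simp: power2_eq_square field_simps)
    also have "\<dots> = (nrm T f + 2 * (\<Sum>v\<in>T. D v * f v * Pop f v) + nrm T (Pop f)) / 4"
      unfolding nrm_def by (simp add: sum_divide_distrib[symmetric] sum.distrib sum_distrib_left)
    finally show ?thesis .
  qed
  have ch: "Q \<le> (1 - h^2 / (8 * (real \<Delta>)^2)) * N" using cheeger[OF S f] by (simp add: Q_def N_def)
  have "nrm T (Lz f) \<le> (N + 2 * Q + N) / 4" using exp nT QT PT by simp
  also have "\<dots> \<le> (N + 2 * ((1 - h^2 / (8 * (real \<Delta>)^2)) * N) + N) / 4" using ch by simp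
  also have "\<dots> = (1 - h^2 / (16 * (real \<Delta>)^2)) * N" by (simp add: field_simps)
  finally show ?thesis by (simp add: N_def)
qed

definition ball :: "'v \<Rightarrow> nat \<Rightarrow> 'v set" where "ball y k = (nb ^^ k) {y}"
definition dl :: "'v \<Rightarrow> 'v \<Rightarrow> real" where "dl y = (\<lambda>v. if v = y then 1 else 0)"
definition cc :: real where "cc = 1 - h^2 / (16 * (real \<Delta>)^2)"

lemma cc_bounds: "0 \<le> cc" "cc \<le> 1" "cc < 1"
proof -
  have D1: "1 \<le> (real \<Delta>)^2" using Delta_ge1 by (simp add: one_le_power)
  have h2: "h^2 \<le> 1" using hpos hle by (simp add: power_le_one)
  have "h^2 / (16 * (real \<Delta>)^2) \<le> 1" using D1 h2 by (simp add: divide_le_eq)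
  then show "0 \<le> cc" by (simp add: cc_def)
  have "0 < h^2 / (16 * (real \<Delta>)^2)" 
  proof (rule divide_pos_pos)
    show "0 < h^2" using hpos by simp
    show "0 < 16 * (real \<Delta>)^2" using D1 by linarith
  qed
  then show "cc < 1" "cc \<le> 1" by (simp_all add: cc_def)
qed

lemma ball_fin: "finite (ball y k)"
  by (induction k) (auto simp: ball_def nb_fin)

lemma ball_Suc: "ball y (Suc k) = nb (ball y k)" by (simp add: ball_def)

lemma Pop_nonneg: "(\<And>w. 0 \<le> f w) \<Longrightarrow> 0 \<le> Pop f v"
  unfolding Pop_def using D_pos[of v] by (intro divide_nonneg_pos sum_nonneg) auto

lemma Pop_mono: "(\<And>w. f w \<le> g w) \<Longrightarrow> Pop f v \<le> Pop g v"
  unfolding Pop_def using D_pos[of v] by (intro divide_right_mono sum_mono) (auto simp: less_imp_le)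

lemma Pop_scale: "Pop (\<lambda>w. a * f w) v = a * Pop f v"
  unfolding Pop_def by (simp add: sum_distrib_left)

lemma supp_Pop: "supp S f \<Longrightarrow> supp (nb S) (Pop f)"
proof -
  assume f: "supp S f"
  show "supp (nb S) (Pop f)" unfolding supp_def
  proof (intro allI impI)
    fix v assume v: "v \<notin> nb S"
    have "\<forall>w\<in>nbrs E v. f w = 0"
    proof
      fix w assume "w \<in> nbrs E v"
      then have "v \<in> nbrs E w" using sym by (simp add: nbrs_iff)
      then have "w \<notin> S" using v by (auto simp: nb_def)
      then show "f w = 0" using f by (simp add: supp_def)
    qed
    then show "Pop f v = 0" by (simp add: Pop_def)
  qed
qed

lemma supp_Lz: "supp S f \<Longrightarrow> supp (nb S) (Lz f)"
  using supp_Pop[of S f] nb_sup[of S] by (auto simp: supp_def Lz_def)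

lemma Lz_iter_nonneg: "(\<And>w. 0 \<le> f w) \<Longrightarrow> 0 \<le> (Lz ^^ k) f v"
proof (induction k arbitrary: v)
  case 0 then show ?case by simp
next
  case (Suc k)
  then show ?case by (simp add: Lz_def Pop_nonneg)
qed

lemma Pop_iter_nonneg: "(\<And>w. 0 \<le> f w) \<Longrightarrow> 0 \<le> (Pop ^^ k) f v"
proof (induction k arbitrary: v)
  case 0 then show ?case by simp
next
  case (Suc k)
  then show ?case by (simp add: Pop_nonneg)
qed

lemma iter_nrm: "supp (ball y k) ((Lz ^^ k) (dl y)) \<and> nrm (ball y k) ((Lz ^^ k) (dl y)) \<le> cc ^ k * D y"
proof (induction k)
  case 0
  show ?case by (simp add: ball_def supp_def dl_def nrm_def)
next
  case (Suc k)
  let ?g = "(Lz ^^ k) (dl y)"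
  have s: "supp (ball y (Suc k)) ((Lz ^^ Suc k) (dl y))" using supp_Lz Suc ball_Suc by simp
  have "nrm (ball y (Suc k)) ((Lz ^^ Suc k) (dl y)) = nrm (nb (ball y k)) (Lz ?g)" by (simp add: ball_Suc)
  also have "\<dots> \<le> cc * nrm (ball y k) ?g"
    using lz_nrm[OF ball_fin nb_fin[OF ball_fin] order_refl] Suc by (simp add: cc_def)
  also have "\<dots> \<le> cc * (cc ^ k * D y)" using Suc cc_bounds by (intro mult_left_mono) auto
  finally show ?case using s by simp
qed

lemma iter_pt: "((Lz ^^ k) (dl y) x)^2 \<le> cc ^ k * real \<Delta>"
proof -
  let ?g = "(Lz ^^ k) (dl y)"
  have ck: "0 \<le> cc ^ k" using cc_bounds by simp
  have "(?g x)^2 \<le> nrm (ball y k) ?g"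
  proof (cases "x \<in> ball y k")
    case True
    have "(?g x)^2 \<le> D x * (?g x)^2" using D_ge1[of x] by (simp add: mult_le_cancel_right1)
    also have "\<dots> \<le> nrm (ball y k) ?g" unfolding nrm_def
      by (rule member_le_sum[OF True]) (use D_pos[THEN less_imp_le] in \<open>auto simp: ball_fin\<close>)
    finally show ?thesis .
  next
    case False
    then show ?thesis using iter_nrm[of y k] nrm_nonneg by (simp add: supp_def)
  qed
  also have "\<dots> \<le> cc ^ k * D y" using iter_nrm by blast
  also have "\<dots> \<le> cc ^ k * real \<Delta>" using ck D_le by (intro mult_left_mono) auto
  finally show ?thesis .
qed

lemma lazy_dom: "(\<And>w. 0 \<le> f w) \<Longrightarrow> real (k choose j) / 2^k * (Pop ^^ j) f v \<le> (Lz ^^ k) f v"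
proof (induction k arbitrary: j v)
  case 0
  then show ?case by (cases j) auto
next
  case (Suc k)
  let ?g = "(Lz ^^ k) f"
  have gnn: "\<And>w. 0 \<le> ?g w" using Lz_iter_nonneg Suc.prems by blast
  have LS: "(Lz ^^ Suc k) f v = (?g v + Pop ?g v) / 2" by (simp add: Lz_def)
  show ?case
  proof (cases j)
    case 0
    have "1 / 2^k * f v \<le> ?g v" using Suc.IH[of 0 v] Suc.prems by simp
    moreover have "0 \<le> Pop ?g v" using Pop_nonneg gnn by blast
    ultimately show ?thesis using LS 0 by simp
  next
    case (Suc i)
    have A: "real (k choose j) / 2^k * (Pop ^^ j) f v \<le> ?g v" using Suc.IH Suc.prems by blast
    have "Pop (\<lambda>w. real (k choose i) / 2^k * (Pop ^^ i) f w) v \<le> Pop ?g v"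
      using Suc.IH Suc.prems by (intro Pop_mono) blast
    then have B0: "real (k choose i) / 2^k * Pop ((Pop ^^ i) f) v \<le> Pop ?g v"
      unfolding Pop_scale .
    have "(Pop ^^ j) f v = Pop ((Pop ^^ i) f) v" using Suc by simp
    then have B: "real (k choose i) / 2^k * (Pop ^^ j) f v \<le> Pop ?g v" using B0 by simp
    have "real (Suc k choose j) / 2 ^ Suc k * (Pop ^^ j) f v
        = (real (k choose j) / 2^k * (Pop ^^ j) f v + real (k choose i) / 2^k * (Pop ^^ j) f v) / 2"
      using Suc by (simp add: field_simps)
    also have "\<dots> \<le> (?g v + Pop ?g v) / 2" by (rule divide_right_mono[OF add_mono[OF A B]]) simp
    finally have X: "real (Suc k choose j) / 2 ^ Suc k * (Pop ^^ j) f v \<le> (?g v + Pop ?g v) / 2" .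
    show ?thesis unfolding LS by (rule X)
  qed
qed

lemma central_binom: "4 ^ n \<le> real (2*n+1) * real ((2*n) choose n)"
proof (cases "n = 0")
  case True then show ?thesis by simp
next
  case False
  then have "4^n / (2*real n) \<le> real ((2*n) choose n)" by (intro central_binomial_lower_bound) simp
  then have "4^n \<le> (2 * real n) * real ((2*n) choose n)" using False by (simp add: divide_le_eq mult.commute)
  also have "\<dots> \<le> real (2*n+1) * real ((2*n) choose n)" by (intro mult_right_mono) auto
  finally show ?thesis .
qed

lemma p_decay: "(Pop ^^ n) (dl y) x \<le> real (2*n+1) * cc ^ n * real \<Delta>"
proof -
  have dnn: "\<And>w. 0 \<le> dl y w" by (simp add: dl_def)
  define L where "L = (Lz ^^ (2*n)) (dl y) x"
  define P where "P = (Pop ^^ n) (dl y) x"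
  define b where "b = real ((2*n) choose n)"
  define q where "q = (2::real)^(2*n)"
  have Lnn: "0 \<le> L" unfolding L_def using Lz_iter_nonneg dnn by blast
  have bpos: "0 < b" unfolding b_def by simp
  have qpos: "0 < q" unfolding q_def by simp
  have dom: "b / q * P \<le> L" unfolding b_def q_def P_def L_def by (rule lazy_dom) (rule dnn)
  have qb: "q \<le> real (2*n+1) * b"
  proof -
    have "(2::real)^(2*n) = (2^2)^n" by (rule power_mult)
    then have "(2::real)^(2*n) = 4^n" by simp
    then show ?thesis using central_binom[of n] by (simp add: q_def b_def)
  qed
  have PL: "P \<le> real (2*n+1) * L" by (rule aux_ineq[OF bpos qpos dom qb Lnn])
  have L2: "L^2 \<le> cc ^ (2*n) * real \<Delta>" unfolding L_def by (rule iter_pt)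
  have e: "(cc ^ n * real \<Delta>)^2 = cc^(2*n) * (real \<Delta>)^2"
    by (metis power_mult_distrib power_even_eq)
  have "real \<Delta> \<le> (real \<Delta>)^2" using Delta_ge1 by (simp add: power2_eq_square)
  then have "cc^(2*n) * real \<Delta> \<le> cc^(2*n) * (real \<Delta>)^2"
    by (rule mult_left_mono) (use cc_bounds in simp)
  then have "L^2 \<le> (cc ^ n * real \<Delta>)^2" using L2 e by linarith
  then have LB: "L \<le> cc ^ n * real \<Delta>"
    by (rule power2_le_imp_le) (use cc_bounds Delta_ge1 in auto)
  have "P \<le> real (2*n+1) * (cc ^ n * real \<Delta>)"
    using PL mult_left_mono[OF LB, of "real (2*n+1)"] by linarith
  then show ?thesis unfolding P_def by (simp add: mult.assoc)
qed

end


fun cnte :: "'v \<Rightarrow> 'v btree \<Rightarrow> ennreal" where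
  "cnte y (Nd t v cs) = (if v = y then 1 else 0) + sum_list (map (cnte y) cs)"

lemma visits_cnte: "visits y T \<Longrightarrow> 1 \<le> cnte y T"
proof (induction T)
  case (Nd t v cs)
  show ?case
  proof (cases "v = y")
    case True then show ?thesis by simp
  next
    case False
    then obtain c where c: "c \<in> set cs" "visits y c" using Nd.prems by auto
    then have "1 \<le> cnte y c" using Nd.IH by blast
    also have "\<dots> \<le> sum_list (map (cnte y) cs)"
      using c(1) by (intro member_le_sum_list) auto
    finally show ?thesis using False by simp
  qed
qed

lemma nn_const_add: "(\<integral>\<^sup>+x. c + f x \<partial>measure_pmf p) = c + (\<integral>\<^sup>+x. f x \<partial>measure_pmf p)"
  for c :: ennreal
  by (simp add: nn_integral_add measure_pmf.emeasure_space_1)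

lemma nn_seq:
  "(\<integral>\<^sup>+cs. sum_list (map g cs) \<partial>measure_pmf (seq_pmf ps)) = sum_list (map (\<lambda>p. \<integral>\<^sup>+x. g x \<partial>measure_pmf p) ps)"
  for g :: "'a \<Rightarrow> ennreal"
proof (induction ps)
  case Nil then show ?case by simp
next
  case (Cons p ps)
  have "(\<integral>\<^sup>+cs. sum_list (map g cs) \<partial>measure_pmf (seq_pmf (p # ps)))
      = (\<integral>\<^sup>+x. (\<integral>\<^sup>+xs. g x + sum_list (map g xs) \<partial>measure_pmf (seq_pmf ps)) \<partial>measure_pmf p)"
    by simp
  also have "\<dots> = (\<integral>\<^sup>+x. g x + (\<integral>\<^sup>+xs. sum_list (map g xs) \<partial>measure_pmf (seq_pmf ps)) \<partial>measure_pmf p)"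
    by (simp only: nn_const_add)
  also have "\<dots> = (\<integral>\<^sup>+x. g x \<partial>measure_pmf p) + (\<integral>\<^sup>+xs. sum_list (map g xs) \<partial>measure_pmf (seq_pmf ps))"
    by (simp add: nn_integral_add measure_pmf.emeasure_space_1)
  finally show ?case using Cons by simp
qed

lemma poisson_mean:
  assumes r: "0 < r"
  shows "(\<integral>\<^sup>+k. of_nat k \<partial>measure_pmf (poisson_pmf r)) = ennreal r"
proof -
  define f where "f k = r ^ k / fact k * exp (-r) * real k" for k
  have e: "(\<lambda>k. r ^ k / fact k) sums exp r"
    using exp_converges[of r] by (simp add: divide_inverse mult.commute)
  have "(\<lambda>k. (r * exp (-r)) * (r ^ k / fact k)) sums ((r * exp (-r)) * exp r)"
    by (rule sums_mult[OF e])
  moreover have "(\<lambda>k. (r * exp (-r)) * (r ^ k / fact k)) = (\<lambda>k. f (Suc k))"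
  proof (rule ext)
    fix k
    have aux: "\<And>m c :: real. 0 < m \<Longrightarrow> 0 < c \<Longrightarrow> (r * r^k) / (m * c) * exp (-r) * m = (r * exp (-r)) * (r ^ k / c)"
      by (simp add: field_simps)
    have "f (Suc k) = (r * r^k) / (real (Suc k) * fact k) * exp (-r) * real (Suc k)"
      unfolding f_def fact_Suc by simp
    also have "\<dots> = (r * exp (-r)) * (r ^ k / fact k)" by (rule aux) auto
    finally show "(r * exp (-r)) * (r ^ k / fact k) = f (Suc k)" by simp
  qed
  moreover have "(r * exp (-r)) * exp r = r" by (simp add: exp_minus field_simps)
  ultimately have "(\<lambda>k. f (Suc k)) sums r" by simp
  then have fs: "f sums r" using sums_Suc_iff[of f r] by (simp add: f_def)
  have fnn: "\<And>k. 0 \<le> f k" using r by (simp add: f_def)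
  have "(\<integral>\<^sup>+k. of_nat k \<partial>measure_pmf (poisson_pmf r)) = (\<integral>\<^sup>+k. ennreal (f k) \<partial>count_space UNIV)"
    unfolding nn_integral_measure_pmf
    by (rule nn_integral_cong) (use r in \<open>simp add: f_def ennreal_of_nat_eq_real_of_nat ennreal_mult'' [symmetric]\<close>)
  also have "\<dots> = (\<Sum>k. ennreal (f k))" by (simp add: nn_integral_count_space_nat)
  also have "\<dots> = ennreal (\<Sum>k. f k)" using fnn fs by (intro suminf_ennreal2) (auto simp: sums_iff)
  also have "(\<Sum>k. f k) = r" using fs by (simp add: sums_iff)
  finally show ?thesis .
qed

lemma poisson_lin:
  assumes r: "0 < r"
  shows "(\<integral>\<^sup>+k. c + of_nat k * a \<partial>measure_pmf (poisson_pmf r)) = c + ennreal r * a"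
proof -
  have "(\<integral>\<^sup>+k. of_nat k * a \<partial>measure_pmf (poisson_pmf r)) = ennreal r * a"
    using poisson_mean[OF r] by (simp add: nn_integral_multc)
  then show ?thesis by (simp add: nn_const_add)
qed


context gr
begin

definition Gy :: "real \<Rightarrow> 'v \<Rightarrow> nat \<Rightarrow> ptype \<Rightarrow> 'v \<Rightarrow> ennreal" where
  "Gy r y n t v = (\<integral>\<^sup>+T. cnte y T \<partial>measure_pmf (bgen E r n t v))"

lemma G_0: "Gy r y 0 t v = (if v = y then 1 else 0)"
  by (simp add: Gy_def)

lemma G_unif:
  "(\<integral>\<^sup>+T. cnte y T \<partial>measure_pmf (pmf_of_set (nbrs E v) \<bind> (\<lambda>w. bgen E r n s w)))
    = (\<Sum>w\<in>nbrs E v. Gy r y n s w) / of_nat (card (nbrs E v))"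
proof -
  have "(\<integral>\<^sup>+T. cnte y T \<partial>measure_pmf (pmf_of_set (nbrs E v) \<bind> (\<lambda>w. bgen E r n s w)))
      = (\<integral>\<^sup>+w. Gy r y n s w \<partial>measure_pmf (pmf_of_set (nbrs E v)))"
    by (simp add: Gy_def)
  also have "\<dots> = (\<Sum>w\<in>nbrs E v. Gy r y n s w) / of_nat (card (nbrs E v))"
    by (rule nn_integral_pmf_of_set[OF degpos fin])
  finally show ?thesis .
qed

lemma G_Suc:
  assumes r: "0 < r"
  shows "Gy r y (Suc n) t v = ((if v = y then 1 else 0) + of_nat (n_bullet t) * ((\<Sum>w\<in>nbrs E v. Gy r y n Bullet w) / of_nat (card (nbrs E v))))
       + ennreal r * ((\<Sum>w\<in>nbrs E v. Gy r y n Circ w) / of_nat (card (nbrs E v)))"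
proof -
  define F where "F s = pmf_of_set (nbrs E v) \<bind> (\<lambda>w. bgen E r n s w)" for s
  define A where "A s = (\<Sum>w\<in>nbrs E v. Gy r y n s w) / of_nat (card (nbrs E v))" for s
  have FA: "\<And>s. (\<integral>\<^sup>+T. cnte y T \<partial>measure_pmf (F s)) = A s"
    unfolding F_def A_def by (rule G_unif)
  have inner: "(\<integral>\<^sup>+cs. cnte y (Nd t v cs) \<partial>measure_pmf (seq_pmf (map F (replicate (n_bullet t) Bullet @ replicate k Circ))))
      = ((if v = y then 1 else 0) + of_nat (n_bullet t) * A Bullet) + of_nat k * A Circ" for k
  proof -
    have "(\<integral>\<^sup>+cs. cnte y (Nd t v cs) \<partial>measure_pmf (seq_pmf (map F (replicate (n_bullet t) Bullet @ replicate k Circ))))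
      = (if v = y then 1 else 0) + (\<integral>\<^sup>+cs. sum_list (map (cnte y) cs) \<partial>measure_pmf (seq_pmf (map F (replicate (n_bullet t) Bullet @ replicate k Circ))))"
      by (simp only: cnte.simps nn_const_add)
    also have "(\<integral>\<^sup>+cs. sum_list (map (cnte y) cs) \<partial>measure_pmf (seq_pmf (map F (replicate (n_bullet t) Bullet @ replicate k Circ))))
       = sum_list (map (\<lambda>p. \<integral>\<^sup>+x. cnte y x \<partial>measure_pmf p) (map F (replicate (n_bullet t) Bullet @ replicate k Circ)))"
      by (rule nn_seq)
    also have "\<dots> = of_nat (n_bullet t) * A Bullet + of_nat k * A Circ"
      by (simp add: FA sum_list_replicate)
    finally show ?thesis by (simp add: add.assoc)
  qed
  have "Gy r y (Suc n) t v = (\<integral>\<^sup>+k. (\<integral>\<^sup>+cs. cnte y (Nd t v cs) \<partial>measure_pmf (seq_pmf (map F (replicate (n_bullet t) Bullet @ replicate k Circ)))) \<partial>measure_pmf (poisson_pmf (r)))"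
    by (simp add: Gy_def F_def)
  also have "\<dots> = (\<integral>\<^sup>+k. ((if v = y then 1 else 0) + of_nat (n_bullet t) * A Bullet) + of_nat k * A Circ \<partial>measure_pmf (poisson_pmf (r)))"
    by (simp only: inner)
  also have "\<dots> = ((if v = y then 1 else 0) + of_nat (n_bullet t) * A Bullet) + ennreal r * A Circ"
    by (rule poisson_lin[OF r])
  finally show ?thesis by (simp add: A_def)
qed

end


context gr
begin

definition pw :: "'v \<Rightarrow> nat \<Rightarrow> 'v \<Rightarrow> real" where "pw y k = (Pop ^^ k) (dl y)"
definition wt :: "ptype \<Rightarrow> real" where "wt t = (case t of Circ \<Rightarrow> 3 | Bullet \<Rightarrow> 1)"

lemma pw_nonneg: "0 \<le> pw y k v"
  unfolding pw_def by (rule Pop_iter_nonneg) (simp add: dl_def)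

lemma pw_Suc: "pw y (Suc k) v = (\<Sum>w\<in>nbrs E v. pw y k w) / D v"
  by (simp add: pw_def Pop_def)

lemma wt_ge1: "1 \<le> wt t" by (cases t) (auto simp: wt_def)

lemma G_bound:
  assumes r: "0 < r"
  shows "Gy r y n t v \<le> ennreal (wt t * (\<Sum>k\<le>n. (1 + 3*r)^k * pw y k v))"
proof (induction n arbitrary: t v)
  case 0
  have e: "wt t * (\<Sum>k\<le>0. (1 + 3*r)^k * pw y k v) = wt t * (if v = y then 1 else 0)"
    by (simp add: pw_def dl_def)
  show ?case
  proof (cases "v = y")
    case True
    then show ?thesis unfolding e G_0 using wt_ge1[of t] by simp
  next
    case False
    then show ?thesis unfolding e G_0 by simp
  qed
next
  case (Suc n)
  define lam where "lam = 1 + 3*r"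
  have lam1: "1 \<le> lam" using r by (simp add: lam_def)
  define S where "S = (\<Sum>k\<le>n. lam^k * pw y (Suc k) v)"
  have Snn: "0 \<le> S" unfolding S_def using lam1 pw_nonneg by (intro sum_nonneg mult_nonneg_nonneg) auto
  have cardD: "(of_nat (card (nbrs E v)) :: ennreal) = ennreal (D v)"
    by (simp add: D_def ennreal_of_nat_eq_real_of_nat)
  have A: "(\<Sum>w\<in>nbrs E v. Gy r y n s w) / of_nat (card (nbrs E v)) \<le> ennreal (wt s * S)" for s
  proof -
    have "(\<Sum>w\<in>nbrs E v. Gy r y n s w) \<le> (\<Sum>w\<in>nbrs E v. ennreal (wt s * (\<Sum>k\<le>n. lam^k * pw y k w)))"
      using Suc.IH by (intro sum_mono) (simp add: lam_def)
    also have "\<dots> = ennreal (\<Sum>w\<in>nbrs E v. wt s * (\<Sum>k\<le>n. lam^k * pw y k w))"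
      using wt_ge1[of s] lam1 pw_nonneg
      by (intro sum_ennreal) (auto intro!: mult_nonneg_nonneg sum_nonneg)
    finally have "(\<Sum>w\<in>nbrs E v. Gy r y n s w) / of_nat (card (nbrs E v))
        \<le> ennreal (\<Sum>w\<in>nbrs E v. wt s * (\<Sum>k\<le>n. lam^k * pw y k w)) / ennreal (D v)"
      unfolding cardD by (rule divide_right_mono_ennreal)
    also have "\<dots> = ennreal ((\<Sum>w\<in>nbrs E v. wt s * (\<Sum>k\<le>n. lam^k * pw y k w)) / D v)"
      using wt_ge1[of s] lam1 pw_nonneg D_pos
      by (intro divide_ennreal) (auto intro!: mult_nonneg_nonneg sum_nonneg)
    also have "(\<Sum>w\<in>nbrs E v. wt s * (\<Sum>k\<le>n. lam^k * pw y k w)) / D v = wt s * S"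
    proof -
      have "(\<Sum>w\<in>nbrs E v. wt s * (\<Sum>k\<le>n. lam^k * pw y k w)) = wt s * (\<Sum>k\<le>n. lam^k * (\<Sum>w\<in>nbrs E v. pw y k w))"
        by (simp add: sum_distrib_left sum.swap[of _ "nbrs E v"] mult.assoc)
      then show ?thesis unfolding S_def pw_Suc
        by (simp add: sum_divide_distrib[symmetric])
    qed
    finally show ?thesis .
  qed
  have "Gy r y (Suc n) t v \<le> (ennreal (if v = y then 1 else 0) + of_nat (n_bullet t) * ennreal (wt Bullet * S)) + ennreal r * ennreal (wt Circ * S)"
    unfolding G_Suc[OF r]
    by (intro add_mono mult_left_mono A) auto
  also have "\<dots> = ennreal ((if v = y then 1 else 0) + real (n_bullet t) * S + r * (3 * S))"
    using Snn r by (simp add: wt_def ennreal_of_nat_eq_real_of_nat ennreal_mult)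
  also have "\<dots> \<le> ennreal (wt t * (\<Sum>k\<le>Suc n. (1 + 3*r)^k * pw y k v))"
  proof (rule ennreal_leI)
    have sum: "(\<Sum>k\<le>Suc n. (1 + 3*r)^k * pw y k v) = pw y 0 v + lam * S"
      unfolding sum.atMost_Suc_shift S_def lam_def by (simp add: sum_distrib_left mult.assoc)
    have p0: "pw y 0 v = (if v = y then 1 else 0)" by (simp add: pw_def dl_def)
    have nb: "real (n_bullet t) + 3 * r \<le> wt t * lam"
      using r by (cases t) (auto simp: wt_def lam_def)
    have "(if v = y then 1 else 0) + real (n_bullet t) * S + r * (3 * S)
        = (if v = y then 1 else 0) + (real (n_bullet t) + 3 * r) * S" by (simp add: algebra_simps)
    also have "\<dots> \<le> wt t * (if v = y then 1 else 0) + (wt t * lam) * S"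
      using wt_ge1[of t] nb Snn by (intro add_mono mult_right_mono) auto
    also have "\<dots> = wt t * (\<Sum>k\<le>Suc n. (1 + 3*r)^k * pw y k v)"
      unfolding sum p0 by (simp add: algebra_simps)
    finally show "(if v = y then 1 else 0) + real (n_bullet t) * S + r * (3 * S) \<le> wt t * (\<Sum>k\<le>Suc n. (1 + 3*r)^k * pw y k v)" .
  qed
  finally show ?case .
qed

end



lemma lin_aux: "5 \<le> 2 * n - 2 * a \<Longrightarrow> (t::real) < 1 \<Longrightarrow> 2 * a + 3 * t \<le> n + a + 1/2 + t/2"
  by linarith

lemma summable_lin_geom:
  fixes \<theta> :: real
  assumes t0: "0 \<le> \<theta>" and t1: "\<theta> < 1"
  shows "summable (\<lambda>k. real (2*k+1) * \<theta>^k)"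
proof (rule summable_ratio_test[where c = "(1+\<theta>)/2" and N = "nat \<lceil>5 / (2*(1-\<theta>))\<rceil>"])
  show "(1+\<theta>)/2 < 1" using t1 by simp
next
  fix n assume n: "nat \<lceil>5 / (2*(1-\<theta>))\<rceil> \<le> n"
  have "5 / (2*(1-\<theta>)) \<le> real n" using n by linarith
  then have n5: "5 \<le> real n * (2*(1-\<theta>))" using t1 by (simp add: divide_le_eq)
  have key: "real (2 * Suc n + 1) * \<theta> \<le> (1+\<theta>)/2 * real (2*n+1)"
  proof -
    have "real (2 * Suc n + 1) * \<theta> = 2 * (real n * \<theta>) + 3 * \<theta>" by (simp add: algebra_simps)
    moreover have "(1+\<theta>)/2 * real (2*n+1) = real n + real n * \<theta> + 1/2 + \<theta>/2" by (simp add: field_simps)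
    moreover have "5 \<le> 2 * real n - 2 * (real n * \<theta>)" using n5 by (simp add: algebra_simps)
    ultimately show ?thesis using t1 lin_aux[of "real n" "real n * \<theta>" \<theta>] by simp
  qed
  have "norm (real (2 * Suc n + 1) * \<theta> ^ Suc n) = (real (2 * Suc n + 1) * \<theta>) * \<theta>^n"
    using t0 by (simp add: algebra_simps)
  also have "\<dots> \<le> ((1+\<theta>)/2 * real (2*n+1)) * \<theta>^n"
    using key t0 by (intro mult_right_mono) auto
  also have "\<dots> = (1+\<theta>)/2 * norm (real (2*n+1) * \<theta>^n)" using t0 by simp
  finally show "norm (real (2 * Suc n + 1) * \<theta> ^ Suc n) \<le> (1+\<theta>)/2 * norm (real (2*n+1) * \<theta>^n)" .
qed

context gr
begin

lemma forest_int:
  assumes r: "0 < r"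
  shows "(\<integral>\<^sup>+F. sum_list (map (cnte y) F) \<partial>measure_pmf (bforest E r n x)) = ennreal r * Gy r y n Circ x"
proof -
  have "(\<integral>\<^sup>+F. sum_list (map (cnte y) F) \<partial>measure_pmf (bforest E r n x))
      = (\<integral>\<^sup>+k. (\<integral>\<^sup>+F. sum_list (map (cnte y) F) \<partial>measure_pmf (seq_pmf (replicate k (bgen E r n Circ x)))) \<partial>measure_pmf (poisson_pmf r))"
    by (simp add: bforest_def)
  also have "\<dots> = (\<integral>\<^sup>+k. 0 + of_nat k * Gy r y n Circ x \<partial>measure_pmf (poisson_pmf r))"
    by (simp only: nn_seq map_replicate sum_list_replicate Gy_def add_0_left)
  also have "\<dots> = 0 + ennreal r * Gy r y n Circ x" by (rule poisson_lin[OF r])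
  finally show ?thesis by simp
qed

lemma prob_bound:
  assumes r: "0 < r"
  shows "measure_pmf.prob (bforest E r n x) {F. \<exists>c\<in>set F. visits y c}
     \<le> r * (3 * (\<Sum>k\<le>n. (1 + 3*r)^k * pw y k x))"
proof -
  define A where "A = {F. \<exists>c\<in>set F. visits y c}"
  define B where "B = r * (3 * (\<Sum>k\<le>n. (1 + 3*r)^k * pw y k x))"
  have Bnn: "0 \<le> B" unfolding B_def using r pw_nonneg
    by (intro mult_nonneg_nonneg sum_nonneg) auto
  have "emeasure (measure_pmf (bforest E r n x)) A = (\<integral>\<^sup>+F. indicator A F \<partial>measure_pmf (bforest E r n x))"
    by simp
  also have "\<dots> \<le> (\<integral>\<^sup>+F. sum_list (map (cnte y) F) \<partial>measure_pmf (bforest E r n x))"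
  proof (rule nn_integral_mono)
    fix F
    show "indicator A F \<le> sum_list (map (cnte y) F)"
    proof (cases "F \<in> A")
      case True
      then obtain c where c: "c \<in> set F" "visits y c" by (auto simp: A_def)
      have "1 \<le> cnte y c" using visits_cnte[OF c(2)] .
      also have "\<dots> \<le> sum_list (map (cnte y) F)" using c(1) by (intro member_le_sum_list) auto
      finally show ?thesis using True by simp
    qed simp
  qed
  also have "\<dots> = ennreal r * Gy r y n Circ x" by (rule forest_int[OF r])
  also have "\<dots> \<le> ennreal r * ennreal (wt Circ * (\<Sum>k\<le>n. (1 + 3*r)^k * pw y k x))"
    by (intro mult_left_mono G_bound[OF r]) auto
  also have "\<dots> = ennreal B"
  proof -
    have nn: "0 \<le> 3 * (\<Sum>k\<le>n. (1 + 3*r)^k * pw y k x)" using r pw_nonneg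
      by (intro mult_nonneg_nonneg sum_nonneg) auto
    show ?thesis by (simp add: B_def wt_def ennreal_mult''[OF nn])
  qed
  finally have "ennreal (measure_pmf.prob (bforest E r n x) A) \<le> ennreal B"
    by (simp add: measure_pmf.emeasure_eq_measure)
  then show ?thesis using Bnn by (simp add: A_def B_def)
qed

lemma pw_walk: "pw y k x \<noteq> 0 \<Longrightarrow> \<exists>p. is_walk E p \<and> hd p = x \<and> last p = y \<and> length p = Suc k"
proof (induction k arbitrary: x)
  case 0
  then have "x = y" by (simp add: pw_def dl_def split: if_splits)
  then show ?case by (intro exI[of _ "[x]"]) (simp add: is_walk_def)
next
  case (Suc k)
  then have "(\<Sum>w\<in>nbrs E x. pw y k w) \<noteq> 0" by (auto simp: pw_Suc)
  then have "\<exists>w\<in>nbrs E x. pw y k w \<noteq> 0"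
  proof (rule contrapos_np)
    assume "\<not> (\<exists>w\<in>nbrs E x. pw y k w \<noteq> 0)"
    then show "(\<Sum>w\<in>nbrs E x. pw y k w) = 0" by simp
  qed
  then obtain w where w: "w \<in> nbrs E x" "pw y k w \<noteq> 0" by blast
  obtain p where p: "is_walk E p" "hd p = w" "last p = y" "length p = Suc k" using Suc.IH[OF w(2)] by blast
  have pne: "p \<noteq> []" using p(1) by (simp add: is_walk_def)
  have "is_walk E (x # p)" unfolding is_walk_def
  proof (intro conjI allI impI)
    fix i assume i: "i < length (x # p) - 1"
    show "E ((x # p) ! i) ((x # p) ! Suc i)"
    proof (cases i)
      case 0
      then show ?thesis using w(1) p(2) pne by (simp add: nbrs_iff hd_conv_nth)
    next
      case (Suc j)
      then show ?thesis using p(1) i by (simp add: is_walk_def)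
    qed
  qed simp
  then show ?case using p pne by (intro exI[of _ "x # p"]) simp
qed

lemma pw_far: "k < gdist E x y \<Longrightarrow> pw y k x = 0"
proof (rule ccontr)
  assume k: "k < gdist E x y" and nz: "pw y k x \<noteq> 0"
  have wk: "\<exists>p. is_walk E p \<and> hd p = x \<and> last p = y \<and> length p = Suc k" by (rule pw_walk[OF nz])
  have "gdist E x y \<le> k" unfolding gdist_def by (rule Least_le) (rule wk)
  then show False using k by simp
qed

end


lemma tail_le:
  fixes g :: "nat \<Rightarrow> real"
  assumes sg: "summable g" and gnn: "\<And>k. 0 \<le> g k"
  shows "(\<Sum>k\<le>n. if d \<le> k then g k else 0) \<le> (\<Sum>i. g (i + d))"
proof -
  have "(\<Sum>k\<le>n. if d \<le> k then g k else 0) = (\<Sum>k\<in>{k\<in>{..n}. d \<le> k}. g k)"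
    by (rule sum.inter_filter[symmetric]) simp
  also have "\<dots> \<le> (\<Sum>k\<in>(\<lambda>i. i + d) ` {..n}. g k)"
  proof (rule sum_mono2)
    show "finite ((\<lambda>i. i + d) ` {..n})" by simp
    show "{k \<in> {..n}. d \<le> k} \<subseteq> (\<lambda>i. i + d) ` {..n}"
    proof
      fix k assume k: "k \<in> {k \<in> {..n}. d \<le> k}"
      then have "k = (k - d) + d" "k - d \<in> {..n}" by auto
      then show "k \<in> (\<lambda>i. i + d) ` {..n}" by blast
    qed
  qed (use gnn in auto)
  also have "\<dots> = (\<Sum>i\<le>n. g (i + d))" by (subst sum.reindex) (auto simp: inj_on_def)
  also have "\<dots> \<le> (\<Sum>i. g (i + d))"
    by (rule sum_le_suminf) (use summable_ignore_initial_segment[OF sg, of d] gnn in auto)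
  finally show ?thesis .
qed

theorem proposition6p2:
  fixes E :: "'v \<Rightarrow> 'v \<Rightarrow> bool" and \<Delta> :: nat
  assumes sym: "\<And>v w. E v w \<Longrightarrow> E w v"
    and irrefl: "\<And>v. \<not> E v v"
    and inf: "infinite (UNIV :: 'v set)"
    and conn: "connected_graph E"
    and nonam: "non_amenable E"
    and deg: "\<And>v. finite (nbrs E v) \<and> card (nbrs E v) \<le> \<Delta>"
  shows "\<exists>u0 > 0. \<forall>x u. 0 < u \<and> u < u0 \<longrightarrow>
           (\<forall>\<epsilon> > 0. \<exists>R. \<forall>y. gdist E x y > R \<longrightarrow> hit_prob E \<Delta> u x y < \<epsilon>)"
proof -
  have fin: "\<And>v. finite (nbrs E v)" and degle: "\<And>v. card (nbrs E v) \<le> \<Delta>" using deg by auto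
  have degpos: "nbrs E v \<noteq> {}" for v
  proof -
    have "UNIV \<noteq> {v}" using inf by (metis finite.emptyI finite_insert)
    then obtain y where y: "y \<noteq> v" by auto
    obtain p where p: "is_walk E p" "hd p = v" "last p = y"
      using conn unfolding connected_graph_def by blast
    have pne: "p \<noteq> []" using p(1) by (simp add: is_walk_def)
    have "length p \<noteq> 1"
    proof
      assume "length p = 1"
      then obtain a where "p = [a]" by (cases p) auto
      then show False using p y by simp
    qed
    then have l: "0 < length p - 1" using pne by (cases p) auto
    then have "E (p ! 0) (p ! Suc 0)" using p(1) unfolding is_walk_def by blast
    moreover have "p ! 0 = v" using p(2) pne by (simp add: hd_conv_nth)
    ultimately have "p ! Suc 0 \<in> nbrs E v" by (simp add: nbrs_def)
    then show ?thesis by blast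
  qed
  define h0 where "h0 = (INF K \<in> {K. finite K \<and> K \<noteq> {}}. real (card (vboundary E K)) / real (card K))"
  have h0pos: "0 < h0" using nonam by (simp add: non_amenable_def h0_def)
  have isoh0: "h0 * real (card K) \<le> real (card (vboundary E K))" if K: "finite K" "K \<noteq> {}" for K
  proof -
    have bdd: "bdd_below ((\<lambda>K. real (card (vboundary E K)) / real (card K)) ` {K. finite K \<and> K \<noteq> {}})"
      by (rule bdd_belowI[of _ 0]) auto
    have "h0 \<le> real (card (vboundary E K)) / real (card K)"
      unfolding h0_def by (rule cINF_lower[OF bdd]) (use K in auto)
    moreover have "0 < real (card K)" using K by (simp add: card_gt_0_iff)
    ultimately show ?thesis by (simp add: pos_le_divide_eq)
  qed
  define h where "h = min h0 1"
  interpret G: gr E \<Delta> h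
  proof
    show "\<And>v w. E v w \<Longrightarrow> E w v" by (rule sym)
    show "\<And>v. finite (nbrs E v)" by (rule fin)
    show "\<And>v. card (nbrs E v) \<le> \<Delta>" by (rule degle)
    show "\<And>v. nbrs E v \<noteq> {}" by (rule degpos)
    show "0 < h" using h0pos by (simp add: h_def)
    show "h \<le> 1" by (simp add: h_def)
    fix K :: "'v set" assume K: "finite K" "K \<noteq> {}"
    have "h * real (card K) \<le> h0 * real (card K)" by (intro mult_right_mono) (auto simp: h_def)
    then show "h * real (card K) \<le> real (card (vboundary E K))" using isoh0[OF K] by linarith
  qed
  define \<theta> where "\<theta> = (1 + G.cc) / 2"
  define u0 where "u0 = (1 - G.cc) / (6 * (real \<Delta>)^2)"
  have D1: "1 \<le> (real \<Delta>)^2" using G.Delta_ge1 by (simp add: one_le_power)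
  have t0: "0 \<le> \<theta>" and t1: "\<theta> < 1" using G.cc_bounds by (auto simp: \<theta>_def)
  have u0pos: "0 < u0" unfolding u0_def
  proof (rule divide_pos_pos)
    show "0 < 1 - G.cc" using G.cc_bounds by simp
    show "0 < 6 * (real \<Delta>)^2" using D1 by linarith
  qed
  have sg: "summable (\<lambda>k. real (2*k+1) * \<theta>^k)" by (rule summable_lin_geom[OF t0 t1])
  show ?thesis
  proof (rule exI[of _ u0], intro conjI allI impI)
    show "0 < u0" by (rule u0pos)
    fix x :: 'v and u \<epsilon> :: real
    assume uu: "0 < u \<and> u < u0" and eps: "0 < \<epsilon>"
    define g where "g k = real (2*k+1) * \<theta>^k" for k
    have gnn: "\<And>k. 0 \<le> g k" using t0 by (simp add: g_def)
    have "g = (\<lambda>k. real (2*k+1) * \<theta>^k)" by (rule ext) (simp add: g_def)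
    then have sg': "summable g" using sg by simp
    define r where "r = u * real \<Delta> ^ 2"
    have rpos: "0 < r" unfolding r_def using uu D1 by (intro mult_pos_pos) linarith+
    define lam where "lam = 1 + 3*r"
    have lam0: "0 \<le> lam" using rpos by (simp add: lam_def)
    have r3: "3 * r \<le> (1 - G.cc) / 2"
    proof -
      have "u * (real \<Delta>)^2 \<le> u0 * (real \<Delta>)^2" using uu D1 by (intro mult_right_mono) auto
      also have "\<dots> = (1 - G.cc) / 6"
      proof -
        have Dn0: "(real \<Delta>)^2 \<noteq> 0" using D1 by linarith
        then show ?thesis by (simp add: u0_def)
      qed
      finally show ?thesis by (simp add: r_def)
    qed
    have lamc: "lam * G.cc \<le> \<theta>"
    proof -
      have "lam * G.cc = G.cc + (3 * r) * G.cc" by (simp add: lam_def algebra_simps)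
      also have "\<dots> \<le> G.cc + 3 * r" using G.cc_bounds rpos by (simp add: mult_le_cancel_left1)
      also have "\<dots> \<le> \<theta>" using r3 by (simp add: \<theta>_def)
      finally show ?thesis .
    qed
    have lc0: "0 \<le> lam * G.cc" using lam0 G.cc_bounds by simp
    define M where "M = r * 3 * real \<Delta>"
    have Mpos: "0 < M" using rpos G.Delta_ge1 by (simp add: M_def)
    obtain N where N: "\<forall>d\<ge>N. norm (\<Sum>i. g (i + d)) < \<epsilon> / M"
      using suminf_exist_split[OF _ sg', of "\<epsilon> / M"] eps Mpos by auto
    show "\<exists>R. \<forall>y. R < gdist E x y \<longrightarrow> hit_prob E \<Delta> u x y < \<epsilon>"
    proof (intro exI[of _ N] allI impI)
      fix y assume dN: "N < gdist E x y"
      define d where "d = gdist E x y"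
      define T where "T = (\<Sum>i. g (i + d))"
      have Tnn: "0 \<le> T" unfolding T_def
        by (rule suminf_nonneg) (use summable_ignore_initial_segment[OF sg', of d] gnn in auto)
      have TN: "T < \<epsilon> / M"
      proof -
        have "norm T < \<epsilon> / M" using N dN unfolding T_def d_def by simp
        then show ?thesis using Tnn by simp
      qed
      have bnd: "measure_pmf.prob (bforest E r n x) {F. \<exists>c\<in>set F. visits y c} \<le> M * T" for n
      proof -
        have "(\<Sum>k\<le>n. lam^k * G.pw y k x) \<le> (\<Sum>k\<le>n. real \<Delta> * (if d \<le> k then g k else 0))"
        proof (rule sum_mono)
          fix k assume "k \<in> {..n}"
          show "lam^k * G.pw y k x \<le> real \<Delta> * (if d \<le> k then g k else 0)"
          proof (cases "d \<le> k")
            case False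
            then have "G.pw y k x = 0" using G.pw_far[of k x y] by (simp add: d_def)
            then show ?thesis using False by simp
          next
            case True
            have pd: "G.pw y k x \<le> real (2*k+1) * G.cc ^ k * real \<Delta>"
              unfolding G.pw_def by (rule G.p_decay)
            have "lam^k * G.pw y k x \<le> lam^k * (real (2*k+1) * G.cc ^ k * real \<Delta>)"
              using pd lam0 by (intro mult_left_mono) auto
            also have "\<dots> = real \<Delta> * (real (2*k+1) * (lam * G.cc)^k)"
              by (simp add: power_mult_distrib algebra_simps)
            also have "\<dots> \<le> real \<Delta> * (real (2*k+1) * \<theta>^k)"
              using lamc lc0 by (intro mult_left_mono power_mono) auto
            finally show ?thesis using True by (simp add: g_def)
          qed
        qed
        also have "\<dots> = real \<Delta> * (\<Sum>k\<le>n. if d \<le> k then g k else 0)"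
          by (simp add: sum_distrib_left)
        also have "\<dots> \<le> real \<Delta> * T"
          unfolding T_def by (intro mult_left_mono tail_le[OF sg' gnn]) auto
        finally have s: "(\<Sum>k\<le>n. lam^k * G.pw y k x) \<le> real \<Delta> * T" .
        have "measure_pmf.prob (bforest E r n x) {F. \<exists>c\<in>set F. visits y c}
            \<le> r * (3 * (\<Sum>k\<le>n. (1 + 3*r)^k * G.pw y k x))" by (rule G.prob_bound[OF rpos])
        also have "\<dots> \<le> r * (3 * (real \<Delta> * T))"
          using s rpos by (simp add: lam_def)
        also have "\<dots> = M * T" by (simp add: M_def)
        finally show ?thesis .
      qed
      have "hit_prob E \<Delta> u x y = (SUP n. measure_pmf.prob (bforest E r n x) {F. \<exists>c\<in>set F. visits y c})"
        by (simp add: hit_prob_def r_def)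
      also have "\<dots> \<le> M * T" by (rule cSUP_least) (use bnd in auto)
      also have "\<dots> < M * (\<epsilon> / M)" using TN Mpos by (rule mult_strict_left_mono)
      also have "\<dots> = \<epsilon>" using Mpos by simp
      finally show "hit_prob E \<Delta> u x y < \<epsilon>" .
    qed
  qed
qed

end
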